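(* \begin{itemize} \item[{\rm a)}] The values of the fields $u$ and $v$ in the vertices of the zig--zag line running from the north--west to the south--east, \[ \Big\{\mathfrak{z}=k+\ell\omega: k+\ell=0,1\Big\}, \] uniquely determine the functions $u,v:V(\mathcal{T}\mathcal{L})\mapsto\mathbb C$ on the whole lattice. \item[{\rm b)}] The values of the fields $u$ and $v$ on the two positive semi-axes, \[ \Big\{\mathfrak{z}=k: k\ge 0\Big\}\cup\Big\{\mathfrak{z}=\ell\omega: \ell\ge 0\Big\}, \] uniquely determine the functions $u,v$ on the whole sector \[ \Big\{\mathfrak{z}=k+\ell\omega: k,\ell\ge 0\Big\}= \Big\{\mathfrak{z}\in V(\mathcal{T}\mathcal{L}): 0\le\arg(\mathfrak{z})\le2\pi/3\Big\}. \] \end{itemize}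
   Context: $V(\mathcal{T}\mathcal{L})=\{k+\ell\omega+m\omega^2\}$, $\omega=e^{2\pi i/3}$, is the vertex set of the regular triangular lattice. The functions $u,v:V(\mathcal{T}\mathcal{L})\to\mathbb C$ are required to solve the $fgh$--system, which in terms of $u,v$ reads \[ \frac{u(\mathfrak{z}_2)-u(\mathfrak{z}_1)}{u(\mathfrak{z}_3)-u(\mathfrak{z}_2)}=\frac{v(\mathfrak{z}_3)-v(\mathfrak{z}_2)}{v(\mathfrak{z}_1)-v(\mathfrak{z}_3)} \] for every elementary triangle with consecutive vertices $\mathfrak{z}_1,\mathfrak{z}_2,\mathfrak{z}_3$ such that $\mathfrak{z}_2-\mathfrak{z}_1,\mathfrak{z}_3-\mathfrak{z}_2,\mathfrak{z}_1-\mathfrak{z}_3\in\{1,\omega,\omega^2\}$. (Genericity assumed so that all divisions make sense.) *)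

theory Defs
  imports Complex_Main
begin

definition omega :: complex where
  "omega = exp (2 * of_real pi * \<i> / 3)"

definition TL :: "complex set" where
  "TL = {of_int k + of_int l * omega + of_int m * omega ^ 2 | k l m. True}"

definition fgh_system :: "(complex \<Rightarrow> complex) \<Rightarrow> (complex \<Rightarrow> complex) \<Rightarrow> bool" where
  "fgh_system u v \<longleftrightarrow>
     (\<forall>z1\<in>TL. \<forall>z2\<in>TL. \<forall>z3\<in>TL.
        z2 - z1 \<in> {1, omega, omega ^ 2} \<and> z3 - z2 \<in> {1, omega, omega ^ 2} \<and>
        z1 - z3 \<in> {1, omega, omega ^ 2} \<longrightarrow>
        (u z2 - u z1) / (u z3 - u z2) = (v z3 - v z2) / (v z1 - v z3))"

text \<open>Genericity: the fields take pairwise distinct values at distinct vertices,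
  so that all divisions make sense.\<close>
definition generic_fields :: "(complex \<Rightarrow> complex) \<Rightarrow> (complex \<Rightarrow> complex) \<Rightarrow> bool" where
  "generic_fields u v \<longleftrightarrow> inj_on u TL \<and> inj_on v TL"

definition zigzag :: "complex set" where
  "zigzag = {of_int k + of_int l * omega | k l. k + l = 0 \<or> k + l = 1}"

definition semi_axes :: "complex set" where
  "semi_axes = {of_nat k | k. True} \<union> {of_nat l * omega | l. True}"

definition sector :: "complex set" where
  "sector = {of_nat k + of_nat l * omega | k l. True}"

end

theory Submission
  imports Defs
begin

lemma omega_eq: "omega = Complex (-1/2) (sqrt 3 / 2)"
proof -
  have "omega = exp (Re (2 * of_real pi * \<i> / 3)) * cis (Im (2 * of_real pi * \<i> / 3))"
    unfolding omega_def by (rule exp_eq_polar)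
  also have "\<dots> = cis (2*pi/3)" by simp
  also have "\<dots> = Complex (-1/2) (sqrt 3 / 2)" by (simp add: cis.code cos_120 sin_120)
  finally show ?thesis .
qed

lemma omega_sq: "omega^2 = -1 - omega"
  unfolding omega_eq by (simp add: power2_eq_square complex_eq_iff)

lemma omega_ne: "omega \<noteq> 1" "omega \<noteq> 0" "omega \<noteq> -1"
  by (auto simp: omega_eq complex_eq_iff)

definition pt :: "int \<Rightarrow> int \<Rightarrow> complex" where
  "pt i j = of_int i + of_int j * omega"

lemma pt_TL: "pt i j \<in> TL"
  unfolding TL_def pt_def by (rule CollectI, rule exI[of _ i], rule exI[of _ j], rule exI[of _ 0]) simp

lemma TL_pt: "z \<in> TL \<Longrightarrow> \<exists>i j. z = pt i j"
  unfolding TL_def pt_def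
proof clarify
  fix k l m :: int
  show "\<exists>i j. of_int k + of_int l * omega + of_int m * omega\<^sup>2 = of_int i + of_int j * omega"
    by (rule exI[of _ "k - m"], rule exI[of _ "l - m"]) (simp add: omega_sq algebra_simps)
qed

lemma tri:
  assumes f: "fgh_system u v" and g: "generic_fields u v"
    and z: "z1 \<in> TL" "z2 \<in> TL" "z3 \<in> TL"
    and d: "z2 - z1 \<in> {1, omega, omega ^ 2}" "z3 - z2 \<in> {1, omega, omega ^ 2}"
           "z1 - z3 \<in> {1, omega, omega ^ 2}"
  shows "(u z3 - u z1) * (v z3 - v z2) = - ((u z2 - u z1) * (v z2 - v z1))"
proof -
  have nz: "(0::complex) \<notin> {1, omega, omega ^ 2}" using omega_ne by auto
  have ne: "z1 \<noteq> z2" "z2 \<noteq> z3" "z3 \<noteq> z1" using d nz by force+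
  have iu: "inj_on u TL" and iv: "inj_on v TL" using g unfolding generic_fields_def by auto
  have a: "u z3 - u z2 \<noteq> 0" using inj_onD[OF iu _ z(3) z(2)] ne by auto
  have b: "v z1 - v z3 \<noteq> 0" using inj_onD[OF iv _ z(1) z(3)] ne by auto
  have "(u z2 - u z1) / (u z3 - u z2) = (v z3 - v z2) / (v z1 - v z3)"
    using f z d unfolding fgh_system_def by blast
  hence "(u z2 - u z1) * (v z1 - v z3) = (v z3 - v z2) * (u z3 - u z2)"
    using a b by (simp add: field_simps)
  thus ?thesis by (simp add: algebra_simps)
qed

lemma key:
  fixes X Y X' Y' a c d K1 K2 :: complex
  assumes "(X - c) * (Y - a) = K1" "(X - c) * (Y - d) = K2"
    "(X' - c) * (Y' - a) = K1" "(X' - c) * (Y' - d) = K2" "a \<noteq> d" "K1 \<noteq> 0"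
  shows "X = X' \<and> Y = Y'"
proof -
  have "K1 - K2 = (X - c) * (Y - a) - (X - c) * (Y - d)" using assms(1,2) by simp
  also have "\<dots> = (X - c) * (d - a)" by (simp add: algebra_simps)
  finally have "(X - c) * (d - a) = K1 - K2" by simp
  moreover have "K1 - K2 = (X' - c) * (Y' - a) - (X' - c) * (Y' - d)" using assms(3,4) by simp
  moreover have "(X' - c) * (Y' - a) - (X' - c) * (Y' - d) = (X' - c) * (d - a)" by (simp add: algebra_simps)
  ultimately have "(X - c) * (d - a) = (X' - c) * (d - a)" by simp
  hence "X = X'" using assms(5) by simp
  moreover have "X - c \<noteq> 0" using assms(1,6) by auto
  moreover have "(X - c) * (Y - a) = (X - c) * (Y' - a)" using assms(1,3) \<open>X = X'\<close> by simp
  ultimately have "Y - a = Y' - a" by simp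
  hence "Y = Y'" by simp
  with \<open>X = X'\<close> show ?thesis by simp
qed


lemma pt_eq_iff: "pt a b = pt c d \<longleftrightarrow> a = c \<and> b = d"
  by (auto simp: pt_def omega_eq complex_eq_iff)

lemma pt_diff: "pt a b - pt c d = of_int (a - c) + of_int (b - d) * omega"
  by (simp add: pt_def algebra_simps)

definition agree :: "(complex \<Rightarrow> complex) \<Rightarrow> (complex \<Rightarrow> complex) \<Rightarrow> (complex \<Rightarrow> complex) \<Rightarrow> (complex \<Rightarrow> complex) \<Rightarrow> complex \<Rightarrow> bool" where
  "agree u v u' v' z \<longleftrightarrow> u z = u' z \<and> v z = v' z"

lemma ne_vals:
  assumes g: "generic_fields u v" and "pt a b \<noteq> pt c d"
  shows "u (pt a b) \<noteq> u (pt c d)" "v (pt a b) \<noteq> v (pt c d)"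
  using assms pt_TL unfolding generic_fields_def inj_on_def by metis+

lemma up:
  assumes f: "fgh_system u v" and f': "fgh_system u' v'"
    and g: "generic_fields u v" and g': "generic_fields u' v'"
    and hA: "agree u v u' v' (pt (i - 1) j)"
    and hC: "agree u v u' v' (pt (i - 1) (j - 1))"
    and hD: "agree u v u' v' (pt i (j - 1))"
  shows "agree u v u' v' (pt i j)"
proof -
  let ?A = "pt (i - 1) j" and ?C = "pt (i - 1) (j - 1)" and ?D = "pt i (j - 1)" and ?W = "pt i j"
  have d1: "?A - ?C = omega" "?W - ?A = 1" "?C - ?W = omega^2" "?D - ?C = 1" "?W - ?D = omega"
    by (simp_all add: pt_diff omega_sq)
  have t1: "\<And>u v. fgh_system u v \<Longrightarrow> generic_fields u v \<Longrightarrow>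
     (u ?W - u ?C) * (v ?W - v ?A) = - ((u ?A - u ?C) * (v ?A - v ?C))"
    by (rule tri) (simp_all only: pt_TL d1, simp_all)
  have t2: "\<And>u v. fgh_system u v \<Longrightarrow> generic_fields u v \<Longrightarrow>
     (u ?W - u ?C) * (v ?W - v ?D) = - ((u ?D - u ?C) * (v ?D - v ?C))"
    by (rule tri) (simp_all only: pt_TL d1, simp_all)
  have nAC: "?A \<noteq> ?C" and nAD: "?A \<noteq> ?D" by (simp_all add: pt_eq_iff)
  have "u ?W = u' ?W \<and> v ?W = v' ?W"
  proof (rule key[where c = "u ?C" and a = "v ?A" and d = "v ?D"])
    show "(u ?W - u ?C) * (v ?W - v ?A) = - ((u ?A - u ?C) * (v ?A - v ?C))" by (rule t1[OF f g])
    show "(u ?W - u ?C) * (v ?W - v ?D) = - ((u ?D - u ?C) * (v ?D - v ?C))" by (rule t2[OF f g])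
    show "(u' ?W - u ?C) * (v' ?W - v ?A) = - ((u ?A - u ?C) * (v ?A - v ?C))"
      using t1[OF f' g'] hA hC hD unfolding agree_def by simp
    show "(u' ?W - u ?C) * (v' ?W - v ?D) = - ((u ?D - u ?C) * (v ?D - v ?C))"
      using t2[OF f' g'] hA hC hD unfolding agree_def by simp
    show "v ?A \<noteq> v ?D" using ne_vals[OF g nAD] by simp
    show "- ((u ?A - u ?C) * (v ?A - v ?C)) \<noteq> 0" using ne_vals[OF g nAC] by simp
  qed
  thus ?thesis unfolding agree_def .
qed

lemma down:
  assumes f: "fgh_system u v" and f': "fgh_system u' v'"
    and g: "generic_fields u v" and g': "generic_fields u' v'"
    and hA: "agree u v u' v' (pt (i + 1) j)"
    and hC: "agree u v u' v' (pt (i + 1) (j + 1))"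
    and hD: "agree u v u' v' (pt i (j + 1))"
  shows "agree u v u' v' (pt i j)"
proof -
  let ?A = "pt (i + 1) j" and ?C = "pt (i + 1) (j + 1)" and ?D = "pt i (j + 1)" and ?W = "pt i j"
  have d1: "?C - ?A = omega" "?W - ?C = omega^2" "?A - ?W = 1" "?C - ?D = 1" "?D - ?W = omega"
    by (simp_all add: pt_diff omega_sq)
  have t1: "\<And>u v. fgh_system u v \<Longrightarrow> generic_fields u v \<Longrightarrow>
     (u ?W - u ?A) * (v ?W - v ?C) = - ((u ?C - u ?A) * (v ?C - v ?A))"
    by (rule tri) (simp_all only: pt_TL d1, simp_all)
  have t2: "\<And>u v. fgh_system u v \<Longrightarrow> generic_fields u v \<Longrightarrow>
     (u ?W - u ?D) * (v ?W - v ?C) = - ((u ?C - u ?D) * (v ?C - v ?D))"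
    by (rule tri) (simp_all only: pt_TL d1, simp_all)
  have nAC: "?C \<noteq> ?A" and nAD: "?A \<noteq> ?D" by (simp_all add: pt_eq_iff)
  have "v ?W = v' ?W \<and> u ?W = u' ?W"
  proof (rule key[where c = "v ?C" and a = "u ?A" and d = "u ?D"])
    show "(v ?W - v ?C) * (u ?W - u ?A) = - ((u ?C - u ?A) * (v ?C - v ?A))"
      using t1[OF f g] by (simp add: mult.commute)
    show "(v ?W - v ?C) * (u ?W - u ?D) = - ((u ?C - u ?D) * (v ?C - v ?D))"
      using t2[OF f g] by (simp add: mult.commute)
    show "(v' ?W - v ?C) * (u' ?W - u ?A) = - ((u ?C - u ?A) * (v ?C - v ?A))"
      using t1[OF f' g'] hA hC hD unfolding agree_def by (simp add: mult.commute)
    show "(v' ?W - v ?C) * (u' ?W - u ?D) = - ((u ?C - u ?D) * (v ?C - v ?D))"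
      using t2[OF f' g'] hA hC hD unfolding agree_def by (simp add: mult.commute)
    show "u ?A \<noteq> u ?D" using ne_vals[OF g nAD] by simp
    show "- ((u ?C - u ?A) * (v ?C - v ?A)) \<noteq> 0" using ne_vals[OF g nAC] by simp
  qed
  thus ?thesis unfolding agree_def by simp
qed


theorem proposition9:
  fixes u v u' v' :: "complex \<Rightarrow> complex"
  assumes "fgh_system u v" and "fgh_system u' v'"
    and "generic_fields u v" and "generic_fields u' v'"
  shows "((\<forall>z\<in>zigzag. u z = u' z \<and> v z = v' z) \<longrightarrow> (\<forall>z\<in>TL. u z = u' z \<and> v z = v' z))
       \<and> ((\<forall>z\<in>semi_axes. u z = u' z \<and> v z = v' z) \<longrightarrow> (\<forall>z\<in>sector. u z = u' z \<and> v z = v' z))"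
proof (intro conjI impI)
  note U = up[OF assms] and D = down[OF assms]
  assume H: "\<forall>z\<in>zigzag. u z = u' z \<and> v z = v' z"
  have Z: "agree u v u' v' (pt i j)" if "i + j = 0 \<or> i + j = 1" for i j
  proof -
    have "pt i j \<in> zigzag" unfolding zigzag_def pt_def using that by blast
    thus ?thesis using H unfolding agree_def by blast
  qed
  have C1: "\<forall>i j. i + j = int n \<longrightarrow> agree u v u' v' (pt i j)" for n
  proof (induction n rule: less_induct)
    case (less n)
    show ?case
    proof (intro allI impI)
      fix i j assume ij: "i + j = int n"
      show "agree u v u' v' (pt i j)"
      proof (cases "n < 2")
        case True thus ?thesis using ij Z by (cases n) auto
      next
        case False
        show ?thesis
        proof (rule U)
          show "agree u v u' v' (pt (i - 1) j)" using less[of "n - 1"] ij False by auto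
          show "agree u v u' v' (pt i (j - 1))" using less[of "n - 1"] ij False by auto
          show "agree u v u' v' (pt (i - 1) (j - 1))" using less[of "n - 2"] ij False by auto
        qed
      qed
    qed
  qed
  have C2: "\<forall>i j. i + j = 1 - int n \<longrightarrow> agree u v u' v' (pt i j)" for n
  proof (induction n rule: less_induct)
    case (less n)
    show ?case
    proof (intro allI impI)
      fix i j assume ij: "i + j = 1 - int n"
      show "agree u v u' v' (pt i j)"
      proof (cases "n < 2")
        case True thus ?thesis using ij Z by (cases n) auto
      next
        case False
        show ?thesis
        proof (rule D)
          show "agree u v u' v' (pt (i + 1) j)" using less[of "n - 1"] ij False by auto
          show "agree u v u' v' (pt i (j + 1))" using less[of "n - 1"] ij False by auto
          show "agree u v u' v' (pt (i + 1) (j + 1))" using less[of "n - 2"] ij False by auto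
        qed
      qed
    qed
  qed
  show "\<forall>z\<in>TL. u z = u' z \<and> v z = v' z"
  proof
    fix z assume "z \<in> TL"
    then obtain i j where z: "z = pt i j" using TL_pt by blast
    have "agree u v u' v' (pt i j)"
    proof (cases "i + j \<ge> 0")
      case True thus ?thesis using C1[of "nat (i + j)"] by auto
    next
      case False thus ?thesis using C2[of "nat (1 - (i + j))"] by auto
    qed
    thus "u z = u' z \<and> v z = v' z" using z unfolding agree_def by simp
  qed
next
  note U = up[OF assms]
  assume H: "\<forall>z\<in>semi_axes. u z = u' z \<and> v z = v' z"
  have S: "agree u v u' v' (pt (int k) (int l))" if "k = 0 \<or> l = 0" for k l
  proof -
    have "pt (int k) (int l) \<in> semi_axes" unfolding semi_axes_def pt_def using that by auto
    thus ?thesis using H unfolding agree_def by blast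
  qed
  have C3: "\<forall>k l. k + l = n \<longrightarrow> agree u v u' v' (pt (int k) (int l))" for n
  proof (induction n rule: less_induct)
    case (less n)
    show ?case
    proof (intro allI impI)
      fix k l :: nat assume kl: "k + l = n"
      show "agree u v u' v' (pt (int k) (int l))"
      proof (cases "k = 0 \<or> l = 0")
        case True thus ?thesis using S by blast
      next
        case False
        then obtain k' l' where k: "k = Suc k'" and l: "l = Suc l'" by (meson not0_implies_Suc)
        show ?thesis
        proof (rule U)
          have e1: "int k - 1 = int k'" "int l - 1 = int l'" using k l by simp_all
          have "agree u v u' v' (pt (int k') (int l))" using less[of "k' + l"] kl k by auto
          thus "agree u v u' v' (pt (int k - 1) (int l))" using e1 by simp
          have "agree u v u' v' (pt (int k) (int l'))" using less[of "k + l'"] kl l by auto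
          thus "agree u v u' v' (pt (int k) (int l - 1))" using e1 by simp
          have "agree u v u' v' (pt (int k') (int l'))" using less[of "k' + l'"] kl k l by auto
          thus "agree u v u' v' (pt (int k - 1) (int l - 1))" using e1 by simp
        qed
      qed
    qed
  qed
  show "\<forall>z\<in>sector. u z = u' z \<and> v z = v' z"
  proof
    fix z assume "z \<in> sector"
    then obtain k l :: nat where z: "z = pt (int k) (int l)" unfolding sector_def pt_def by auto
    thus "u z = u' z \<and> v z = v' z" using C3[of "k + l"] unfolding agree_def by auto
  qed
qed

end
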